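(* Let $X_\ell$ be one of the affine types listed in the context and let $p:\{0,1,\dots,k-1\}\to I$ be a type $X_\ell$ path of length $k$. If $k>1$, then there is a unique directed walk in $B^{1,1}$ corresponding to $p$ (i.e. a unique sequence of $k$ consecutive arrows whose $t$-th arrow has color $p(t)$ for each $t$).
   Context: $I=\{0,1,\dots,\ell\}$ indexes the Dynkin nodes of the affine type $X_\ell$, one of $A^{(1)}_\ell$ ($\ell\ge2$), $C^{(1)}_\ell$ ($\ell\ge2$), $A^{(2)}_{2\ell}$ ($\ell\ge2$), $A^{(2)\dagger}_{2\ell}$ ($\ell\ge2$), $D^{(2)}_{\ell+1}$ ($\ell\ge2$), $D^{(1)}_\ell$ ($\ell\ge4$), $B^{(1)}_\ell$ ($\ell\ge3$), $A^{(2)}_{2\ell-1}$ ($\ell\ge3$). The Kirillov–Reshetikhin crystal $B^{1,1}$ of type $X_\ell$ is the following $I$-colored directed graph: $A^{(1)}_\ell$: a directed cycle with $\ell+1$ nodes whose successive arrows have colors $1,2,\dots,\ell,0$; $C^{(1)}_\ell$: directed cycle with $2\ell$ nodes, colors $1,\dots,\ell,\ell-1,\dots,1,0$; $A^{(2)}_{2\ell}$: cycle with $2\ell+1$ nodes, colors $1,\dots,\ell,\ell-1,\dots,1,0,0$; $A^{(2)\dagger}_{2\ell}$: cycle with $2\ell+1$ nodes, colors $1,\dots,\ell,\ell,\ell-1,\dots,1,0$; $D^{(2)}_{\ell+1}$: cycle with $2\ell+2$ nodes, colors $1,\dots,\ell,\ell,\ell-1,\dots,1,0,0$; $B^{(1)}_\ell$: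 nodes $u_1,\dots,u_\ell,z,\bar u_\ell,\dots,\bar u_1$ with arrows $u_t\xrightarrow{t}u_{t+1}$, $\bar u_{t+1}\xrightarrow{t}\bar u_t$ ($1\le t\le\ell-1$), $u_\ell\xrightarrow{\ell}z\xrightarrow{\ell}\bar u_\ell$, $\bar u_1\xrightarrow{0}u_2$, $\bar u_2\xrightarrow{0}u_1$; $A^{(2)}_{2\ell-1}$: as for $B^{(1)}_\ell$ but without $z$, with a single arrow $u_\ell\xrightarrow{\ell}\bar u_\ell$; $D^{(1)}_\ell$: nodes $u_1,\dots,u_{\ell-1},v,v',\bar u_{\ell-1},\dots,\bar u_1$ with arrows $u_t\xrightarrow{t}u_{t+1}$, $\bar u_{t+1}\xrightarrow{t}\bar u_t$ ($1\le t\le\ell-2$), $u_{\ell-1}\xrightarrow{\ell-1}v\xrightarrow{\ell}\bar u_{\ell-1}$, $u_{\ell-1}\xrightarrow{\ell}v'\xrightarrow{\ell-1}\bar u_{\ell-1}$, $\bar u_1\xrightarrow{0}u_2$, $\bar u_2\xrightarrow{0}u_1$. A type $X_\ell$ path of length $k$ is a function $p:\{0,\dots,k-1\}\to I$ such that there is a directed walk in $B^{1,1}$ whose $t$-th step is a $p(t)$-colored arrow. *)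

theory Defs
  imports Main
begin

datatype aff_type = A1 | C1 | A2even | A2even_dag | D2 | D1 | B1 | A2odd

definition valid_type :: "aff_type \<Rightarrow> nat \<Rightarrow> bool" where
  "valid_type X l = (case X of
       A1 \<Rightarrow> l \<ge> 2 | C1 \<Rightarrow> l \<ge> 2 | A2even \<Rightarrow> l \<ge> 2 | A2even_dag \<Rightarrow> l \<ge> 2
     | D2 \<Rightarrow> l \<ge> 2 | D1 \<Rightarrow> l \<ge> 4 | B1 \<Rightarrow> l \<ge> 3 | A2odd \<Rightarrow> l \<ge> 3)"

text \<open>Nodes of B^{1,1}: Cyc i for the cycle types, U t = u_t, Z = z, Ub t = bar u_t, V = v, V' = v'.\<close>
datatype node = Cyc nat | U nat | Z | Ub nat | V | V'

text \<open>Colour sequences of the cyclic crystals (arrow i goes from node i to node i+1 mod length).\<close>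
definition cycle_colors :: "aff_type \<Rightarrow> nat \<Rightarrow> nat list" where
  "cycle_colors X l = (case X of
       A1 \<Rightarrow> [1..<l+1] @ [0]
     | C1 \<Rightarrow> [1..<l+1] @ rev [1..<l] @ [0]
     | A2even \<Rightarrow> [1..<l+1] @ rev [1..<l] @ [0, 0]
     | A2even_dag \<Rightarrow> [1..<l+1] @ rev [1..<l+1] @ [0]
     | D2 \<Rightarrow> [1..<l+1] @ rev [1..<l+1] @ [0, 0]
     | _ \<Rightarrow> [])"

definition cycle_arrows :: "nat list \<Rightarrow> (node \<times> nat \<times> node) set" where
  "cycle_arrows cs = {(Cyc i, cs ! i, Cyc ((i + 1) mod length cs)) | i. i < length cs}"

definition zero_arrows :: "(node \<times> nat \<times> node) set" where
  "zero_arrows = {(Ub 1, 0, U 2), (Ub 2, 0, U 1)}"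

text \<open>Arrows of the Kirillov-Reshetikhin crystal B^{1,1} as (source, colour, target).\<close>
definition arrows :: "aff_type \<Rightarrow> nat \<Rightarrow> (node \<times> nat \<times> node) set" where
  "arrows X l = (case X of
       B1 \<Rightarrow> {(U t, t, U (t+1)) | t. 1 \<le> t \<and> t \<le> l - 1}
            \<union> {(Ub (t+1), t, Ub t) | t. 1 \<le> t \<and> t \<le> l - 1}
            \<union> {(U l, l, Z), (Z, l, Ub l)} \<union> zero_arrows
     | A2odd \<Rightarrow> {(U t, t, U (t+1)) | t. 1 \<le> t \<and> t \<le> l - 1}
            \<union> {(Ub (t+1), t, Ub t) | t. 1 \<le> t \<and> t \<le> l - 1}
            \<union> {(U l, l, Ub l)} \<union> zero_arrows
     | D1 \<Rightarrow> {(U t, t, U (t+1)) | t. 1 \<le> t \<and> t \<le> l - 2}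
            \<union> {(Ub (t+1), t, Ub t) | t. 1 \<le> t \<and> t \<le> l - 2}
            \<union> {(U (l-1), l-1, V), (V, l, Ub (l-1)), (U (l-1), l, V'), (V', l-1, Ub (l-1))}
            \<union> zero_arrows
     | _ \<Rightarrow> cycle_arrows (cycle_colors X l))"

definition is_walk :: "aff_type \<Rightarrow> nat \<Rightarrow> nat \<Rightarrow> (nat \<Rightarrow> nat) \<Rightarrow> (node \<times> nat \<times> node) list \<Rightarrow> bool" where
  "is_walk X l k p ws \<longleftrightarrow> length ws = k
     \<and> (\<forall>t<k. ws ! t \<in> arrows X l \<and> fst (snd (ws ! t)) = p t)
     \<and> (\<forall>t. t + 1 < k \<longrightarrow> snd (snd (ws ! t)) = fst (ws ! (t + 1)))"

text \<open>Only the values p 0, ..., p (k-1) matter.\<close>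
definition is_path :: "aff_type \<Rightarrow> nat \<Rightarrow> nat \<Rightarrow> (nat \<Rightarrow> nat) \<Rightarrow> bool" where
  "is_path X l k p \<longleftrightarrow> (\<exists>ws. is_walk X l k p ws)"

end

theory Submission imports Defs begin

definition pairu :: "(node \<times> nat \<times> node) set \<Rightarrow> bool" where
 "pairu A \<longleftrightarrow> (\<forall>a1 a2 b1 b2. a1 \<in> A \<longrightarrow> a2 \<in> A \<longrightarrow> b1 \<in> A \<longrightarrow> b2 \<in> A \<longrightarrow>
    snd (snd a1) = fst a2 \<longrightarrow> snd (snd b1) = fst b2 \<longrightarrow> fst (snd a1) = fst (snd b1) \<longrightarrow>
    fst (snd a2) = fst (snd b2) \<longrightarrow> a1 = b1 \<and> a2 = b2)"

lemma cyc_pairu: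
  assumes n: "length cs = n" "n \<ge> 2"
  and c: "\<And>i j. i < n \<Longrightarrow> j < n \<Longrightarrow> cs!i = cs!j \<Longrightarrow> cs!((i+1) mod n) = cs!((j+1) mod n) \<Longrightarrow> i = j"
  shows "pairu (cycle_arrows cs)"
  unfolding pairu_def cycle_arrows_def
proof (intro allI impI)
  fix a1 a2 b1 b2
  assume h: "a1 \<in> {(Cyc i, cs ! i, Cyc ((i + 1) mod length cs)) |i. i < length cs}"
    "a2 \<in> {(Cyc i, cs ! i, Cyc ((i + 1) mod length cs)) |i. i < length cs}"
    "b1 \<in> {(Cyc i, cs ! i, Cyc ((i + 1) mod length cs)) |i. i < length cs}"
    "b2 \<in> {(Cyc i, cs ! i, Cyc ((i + 1) mod length cs)) |i. i < length cs}"
    "snd (snd a1) = fst a2" "snd (snd b1) = fst b2" "fst (snd a1) = fst (snd b1)"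
    "fst (snd a2) = fst (snd b2)"
  from h(1) obtain i where i: "a1 = (Cyc i, cs ! i, Cyc ((i + 1) mod n))" "i < n" using n by auto
  from h(2) obtain i2 where i2: "a2 = (Cyc i2, cs ! i2, Cyc ((i2 + 1) mod n))" "i2 < n" using n by auto
  from h(3) obtain j where j: "b1 = (Cyc j, cs ! j, Cyc ((j + 1) mod n))" "j < n" using n by auto
  from h(4) obtain j2 where j2: "b2 = (Cyc j2, cs ! j2, Cyc ((j2 + 1) mod n))" "j2 < n" using n by auto
  have "i2 = (i+1) mod n" "j2 = (j+1) mod n" using h(5,6) i i2 j j2 by auto
  then have "i = j" using c[of i j] h(7,8) i i2 j j2 by auto
  then show "a1 = b1 \<and> a2 = b2" using i i2 j j2 \<open>i2 = _\<close> \<open>j2 = _\<close> by auto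
qed

lemma cyc_pairu2:
  assumes n: "length cs = n" "n \<ge> 2" and f: "\<And>i. i < n \<Longrightarrow> cs!i = f i"
  and c: "\<And>i j. i < n \<Longrightarrow> j < n \<Longrightarrow> f i = f j \<Longrightarrow> f (if i+1 = n then 0 else i+1) = f (if j+1 = n then 0 else j+1) \<Longrightarrow> i = j"
  shows "pairu (cycle_arrows cs)"
proof (rule cyc_pairu[OF n])
  fix i j assume "i < n" "j < n" "cs!i = cs!j" "cs!((i+1) mod n) = cs!((j+1) mod n)"
  moreover have "(i+1) mod n = (if i+1 = n then 0 else i+1)" "(j+1) mod n = (if j+1 = n then 0 else j+1)"
    using \<open>i<n\<close> \<open>j<n\<close> by auto
  moreover have "(i+1) mod n < n" "(j+1) mod n < n" using n by auto
  ultimately have "f i = f j" "f (if i+1 = n then 0 else i+1) = f (if j+1 = n then 0 else j+1)"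
    using f[of i] f[of j] f[of "(i+1) mod n"] f[of "(j+1) mod n"] by auto
  then show "i = j" using c[of i j] \<open>i<n\<close> \<open>j<n\<close> by blast
qed

lemma C1_nth: "l \<ge> 2 \<Longrightarrow> i < 2*l \<Longrightarrow> ([1..<l+1] @ rev [1..<l] @ [0]) ! i =
   (if i < l then i+1 else if i < 2*l - 1 then 2*l-1-i else 0)"
  by (auto simp: nth_append rev_nth nth_Cons')

lemma C1_arith:
  fixes l i j :: nat
  defines "f \<equiv> \<lambda>i. (if i < l then i+1 else if i < 2*l - 1 then 2*l-1-i else 0)"
  assumes "l \<ge> 2" "i < 2*l" "j < 2*l" "f i = f j"
    "f (if i+1 = 2*l then 0 else i+1) = f (if j+1 = 2*l then 0 else j+1)"
  shows "i = j"
  using assms(2-) unfolding f_def by (auto split: if_split_asm)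

lemma C1: "l \<ge> 2 \<Longrightarrow> pairu (cycle_arrows (cycle_colors C1 l))"
  unfolding cycle_colors_def aff_type.case
  apply (rule cyc_pairu2[where n="2*l", OF _ _ C1_nth])
  apply simp
  apply simp
  apply assumption
  apply assumption
  apply (rule C1_arith)
  apply assumption+
  done


lemma A1_nth: "l \<ge> 2 \<Longrightarrow> i < l+1 \<Longrightarrow> ([1..<l+1] @ [0]) ! i = (if i < l then i+1 else 0)"
  by (auto simp: nth_append rev_nth nth_Cons')

lemma A1_arith:
  fixes l i j :: nat
  defines "f \<equiv> \<lambda>i. (if i < l then i+1 else 0)"
  assumes "l \<ge> 2" "i < l+1" "j < l+1" "f i = f j"
    "f (if i+1 = l+1 then 0 else i+1) = f (if j+1 = l+1 then 0 else j+1)"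
  shows "i = j"
  using assms(2-) unfolding f_def by (auto split: if_split_asm)

lemma A1: "l \<ge> 2 \<Longrightarrow> pairu (cycle_arrows (cycle_colors A1 l))"
  unfolding cycle_colors_def aff_type.case
  apply (rule cyc_pairu2[where n="l+1", OF _ _ A1_nth])
  apply simp
  apply simp
  apply assumption
  apply assumption
  apply (rule A1_arith)
  apply assumption+
  done

lemma A2even_nth: "l \<ge> 2 \<Longrightarrow> i < 2*l+1 \<Longrightarrow> ([1..<l+1] @ rev [1..<l] @ [0, 0]) ! i = (if i < l then i+1 else if i < 2*l - 1 then 2*l-1-i else 0)"
  by (auto simp: nth_append rev_nth nth_Cons')

lemma A2even_arith:
  fixes l i j :: nat
  defines "f \<equiv> \<lambda>i. (if i < l then i+1 else if i < 2*l - 1 then 2*l-1-i else 0)"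
  assumes "l \<ge> 2" "i < 2*l+1" "j < 2*l+1" "f i = f j"
    "f (if i+1 = 2*l+1 then 0 else i+1) = f (if j+1 = 2*l+1 then 0 else j+1)"
  shows "i = j"
  using assms(2-) unfolding f_def by (auto split: if_split_asm)

lemma A2even: "l \<ge> 2 \<Longrightarrow> pairu (cycle_arrows (cycle_colors A2even l))"
  unfolding cycle_colors_def aff_type.case
  apply (rule cyc_pairu2[where n="2*l+1", OF _ _ A2even_nth])
  apply simp
  apply simp
  apply assumption
  apply assumption
  apply (rule A2even_arith)
  apply assumption+
  done

lemma A2even_dag_nth: "l \<ge> 2 \<Longrightarrow> i < 2*l+1 \<Longrightarrow> ([1..<l+1] @ rev [1..<l+1] @ [0]) ! i = (if i < l then i+1 else if i < 2*l then 2*l-i else 0)"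
  by (auto simp: nth_append rev_nth nth_Cons')

lemma A2even_dag_arith:
  fixes l i j :: nat
  defines "f \<equiv> \<lambda>i. (if i < l then i+1 else if i < 2*l then 2*l-i else 0)"
  assumes "l \<ge> 2" "i < 2*l+1" "j < 2*l+1" "f i = f j"
    "f (if i+1 = 2*l+1 then 0 else i+1) = f (if j+1 = 2*l+1 then 0 else j+1)"
  shows "i = j"
  using assms(2-) unfolding f_def by (auto split: if_split_asm)

lemma A2even_dag: "l \<ge> 2 \<Longrightarrow> pairu (cycle_arrows (cycle_colors A2even_dag l))"
  unfolding cycle_colors_def aff_type.case
  apply (rule cyc_pairu2[where n="2*l+1", OF _ _ A2even_dag_nth])
  apply simp
  apply simp
  apply assumption
  apply assumption
  apply (rule A2even_dag_arith)
  apply assumption+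
  done

lemma D2_nth: "l \<ge> 2 \<Longrightarrow> i < 2*l+2 \<Longrightarrow> ([1..<l+1] @ rev [1..<l+1] @ [0, 0]) ! i = (if i < l then i+1 else if i < 2*l then 2*l-i else 0)"
  by (auto simp: nth_append rev_nth nth_Cons')

lemma D2_arith:
  fixes l i j :: nat
  defines "f \<equiv> \<lambda>i. (if i < l then i+1 else if i < 2*l then 2*l-i else 0)"
  assumes "l \<ge> 2" "i < 2*l+2" "j < 2*l+2" "f i = f j"
    "f (if i+1 = 2*l+2 then 0 else i+1) = f (if j+1 = 2*l+2 then 0 else j+1)"
  shows "i = j"
  using assms(2-) unfolding f_def by (auto split: if_split_asm)

lemma D2: "l \<ge> 2 \<Longrightarrow> pairu (cycle_arrows (cycle_colors D2 l))"
  unfolding cycle_colors_def aff_type.case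
  apply (rule cyc_pairu2[where n="2*l+2", OF _ _ D2_nth])
  apply simp
  apply simp
  apply assumption
  apply assumption
  apply (rule D2_arith)
  apply assumption+
  done

lemma B1: "l \<ge> 3 \<Longrightarrow> pairu (arrows B1 l)"
  unfolding pairu_def arrows_def aff_type.case zero_arrows_def
  by auto

lemma A2odd: "l \<ge> 3 \<Longrightarrow> pairu (arrows A2odd l)"
  unfolding pairu_def arrows_def aff_type.case zero_arrows_def
  by auto

lemma D1: "l \<ge> 4 \<Longrightarrow> pairu (arrows D1 l)"
  unfolding pairu_def arrows_def aff_type.case zero_arrows_def
  by auto

lemma all_pairu: "valid_type X l \<Longrightarrow> pairu (arrows X l)"
  apply (cases X)
  apply (simp_all add: valid_type_def D1 B1 A2odd)
  apply (simp_all only: arrows_def aff_type.case)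
  apply (simp_all add: A1 C1 A2even A2even_dag D2)
  done

theorem mainTheorem4:
  fixes X :: aff_type and l k :: nat and p :: "nat \<Rightarrow> nat"
  assumes "valid_type X l" and "is_path X l k p" and "k > 1"
  shows "\<exists>!ws. is_walk X l k p ws"
proof -
  have P: "pairu (arrows X l)" using all_pairu assms(1) .
  obtain ws where ws: "is_walk X l k p ws" using assms(2) unfolding is_path_def by blast
  have "ws' = ws" if ws': "is_walk X l k p ws'" for ws'
  proof (rule nth_equalityI)
    show "length ws' = length ws" using ws ws' unfolding is_walk_def by simp
    fix t assume "t < length ws'"
    then have t: "t < k" using ws' unfolding is_walk_def by simp
    note W = ws[unfolded is_walk_def] ws'[unfolded is_walk_def]
    show "ws' ! t = ws ! t"
    proof (cases "t + 1 < k")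
      case True
      then show ?thesis using P[unfolded pairu_def, rule_format, of "ws'!t" "ws'!(t+1)" "ws!t" "ws!(t+1)"] W t
        by auto
    next
      case False
      then have tt: "t = (t - 1) + 1" "t - 1 < k" using assms(3) t by auto
      then show ?thesis using P[unfolded pairu_def, rule_format, of "ws'!(t-1)" "ws'!t" "ws!(t-1)" "ws!t"] W t
        by (metis (no_types, lifting))
    qed
  qed
  then show ?thesis using ws by blast
qed

end
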